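(* Let $k>0$, $\sigma>0$, $\eta>0$ and $\beta\in(0,1)$ be real numbers, and let \[ A:=\begin{pmatrix} 1+\sigma\eta& 0& 0\\ -k& 1& 0\\ 0& -1& 1\end{pmatrix}^{-1}\begin{pmatrix} \sigma\eta& \eta& 1\\ 0& \beta& 0\\ 0& 0& 1\end{pmatrix}. \] Then: (i) One has \[ A=\begin{pmatrix} \frac{\sigma\eta}{1+\sigma\eta}& \frac{\eta}{1+\sigma\eta} & \frac{1}{1+\sigma\eta}\\ \frac{k\sigma\eta}{1+\sigma\eta}& \frac{k\eta}{1+\sigma\eta}+\beta& \frac{k}{1+\sigma\eta}\\ \frac{k\sigma\eta}{1+\sigma\eta}& \frac{k\eta}{1+\sigma\eta}+\beta& \frac{k}{1+\sigma\eta}+1\end{pmatrix}. \] (ii) The eigenvalues of $A$ are exactly the roots of $P(x)=x^3-bx^2+cx-d$, where \[ b=\frac{\sigma\eta+k(1+\eta)}{1+\sigma\eta}+1+\beta,\quad c=(1+\beta)\frac{\sigma\eta}{1+\sigma\eta}+\frac{k\eta}{1+\sigma\eta}+\beta,\quad d=\frac{\beta\sigma\eta}{1+\sigma\eta}. \] (iii) The model is unconditionally determined: for every $(k,\sigma,\eta,\beta)$ with $k>0$, $\sigma>0$, $\eta>0$, $0<\beta<1$, the matrix $A$ has two eigenvalues inside the unit disk and the remaining one outside the unit disk.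
   Context: The unit disk means the open set $\{z\in\mathbb{C}:\ |z|<1\}$. The parameter space is $S=\{(k,\sigma,\eta,\beta)\in\mathbb{R}^4:\ k>0,\sigma>0,\eta>0,0<\beta<1\}$; "unconditionally determined" means the determinacy property (two eigenvalues of $A$ inside the unit disk, one outside) holds for every point of $S$. *)

theory Defs
  imports Complex_Main "Jordan_Normal_Form.Matrix" "Jordan_Normal_Form.Char_Poly"
    "Jordan_Normal_Form.Gauss_Jordan_Elimination"
begin

definition Lmat :: "real \<Rightarrow> real \<Rightarrow> real \<Rightarrow> real \<Rightarrow> real mat" where
  "Lmat k s e b = mat_of_rows_list 3 [[1 + s*e, 0, 0], [-k, 1, 0], [0, -1, 1]]"

definition Rmat :: "real \<Rightarrow> real \<Rightarrow> real \<Rightarrow> real \<Rightarrow> real mat" where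
  "Rmat k s e b = mat_of_rows_list 3 [[s*e, e, 1], [0, b, 0], [0, 0, 1]]"

definition Amat :: "real \<Rightarrow> real \<Rightarrow> real \<Rightarrow> real \<Rightarrow> real mat" where
  "Amat k s e b = the (mat_inverse (Lmat k s e b)) * Rmat k s e b"

definition Pb :: "real \<Rightarrow> real \<Rightarrow> real \<Rightarrow> real \<Rightarrow> real" where
  "Pb k s e b = (s*e + k*(1+e)) / (1 + s*e) + 1 + b"
definition Pc :: "real \<Rightarrow> real \<Rightarrow> real \<Rightarrow> real \<Rightarrow> real" where
  "Pc k s e b = (1+b) * (s*e / (1 + s*e)) + k*e / (1 + s*e) + b"
definition Pd :: "real \<Rightarrow> real \<Rightarrow> real \<Rightarrow> real \<Rightarrow> real" where
  "Pd k s e b = b*s*e / (1 + s*e)"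

definition Ppoly :: "real \<Rightarrow> real \<Rightarrow> real \<Rightarrow> real \<Rightarrow> complex poly" where
  "Ppoly k s e b = [: - complex_of_real (Pd k s e b), complex_of_real (Pc k s e b),
                     - complex_of_real (Pb k s e b), 1 :]"

end

theory Submission imports Defs begin
lemma det2: assumes "(A :: 'a :: comm_ring_1 mat) \<in> carrier_mat 2 2"
  shows "det A = A$$(0,0)*A$$(1,1) - A$$(0,1)*A$$(1,0)"
proof -
  have "det A = (\<Sum>j<2. A $$ (0,j) * cofactor A 0 j)" by (rule laplace_expansion_row[OF assms]) simp
  also have "\<dots> = A$$(0,0)*A$$(1,1) - A$$(0,1)*A$$(1,0)"
    using assms
    apply (simp add: cofactor_def numeral_2_eq_2 lessThan_Suc)
    apply (subst (1 2) laplace_expansion_row[where i=0 and n=1])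
    apply (auto simp: cofactor_def mat_delete_def)
    done
  finally show ?thesis .
qed
lemma det3: assumes "(A :: 'a :: comm_ring_1 mat) \<in> carrier_mat 3 3"
  shows "det A = A$$(0,0)*(A$$(1,1)*A$$(2,2) - A$$(1,2)*A$$(2,1))
     - A$$(0,1)*(A$$(1,0)*A$$(2,2) - A$$(1,2)*A$$(2,0))
     + A$$(0,2)*(A$$(1,0)*A$$(2,1) - A$$(1,1)*A$$(2,0))"
proof -
  have "det A = (\<Sum>j<3. A $$ (0,j) * cofactor A 0 j)" by (rule laplace_expansion_row[OF assms]) simp
  also have "\<dots> = A $$ (0,0) * cofactor A 0 0 + A $$ (0,1) * cofactor A 0 1 + A $$ (0,2) * cofactor A 0 2"
    by (simp add: numeral_3_eq_3 numeral_2_eq_2 lessThan_Suc)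
  also have "\<dots> = A$$(0,0)*(A$$(1,1)*A$$(2,2) - A$$(1,2)*A$$(2,1))
     - A$$(0,1)*(A$$(1,0)*A$$(2,2) - A$$(1,2)*A$$(2,0))
     + A$$(0,2)*(A$$(1,0)*A$$(2,1) - A$$(1,1)*A$$(2,0))" using assms
    unfolding cofactor_def
    apply (subst (1 2 3) det2)
       apply (auto simp: mat_delete_def insert_index_def algebra_simps numeral_2_eq_2)
    done
  finally show ?thesis .
qed
lemma cp3: assumes A: "(A :: real mat) \<in> carrier_mat 3 3"
  shows "char_poly A = [: -det A, A$$(0,0)*A$$(1,1) - A$$(0,1)*A$$(1,0) + A$$(0,0)*A$$(2,2) - A$$(0,2)*A$$(2,0)
     + A$$(1,1)*A$$(2,2) - A$$(1,2)*A$$(2,1), -(A$$(0,0)+A$$(1,1)+A$$(2,2)), 1:]"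
proof -
  have C: "char_poly_matrix A \<in> carrier_mat 3 3" using A by simp
  show ?thesis unfolding char_poly_def det3[OF C] det3[OF A]
    using A by (simp add: char_poly_matrix_def algebra_simps)
qed
lemma roots_loc: fixes b c d :: real
  assumes b: "b>0" and c: "c>0" and d0: "0<d" and d1: "d<1" and f1: "1-b+c-d<0"
  shows "\<exists>z1 z2 z3::complex. [:-of_real d, of_real c, -of_real b, 1:] = [:-z1,1:]*[:-z2,1:]*[:-z3,1:]
     \<and> cmod z1<1 \<and> cmod z2<1 \<and> cmod z3>1"
proof -
  define f where "f = (\<lambda>x::real. x^3 - b*x^2 + c*x - d)"
  define M where "M = b + d + 1"
  have M1: "M \<ge> 1" using b d0 by (simp add: M_def)
  have fM: "f M > 0"
  proof -
    have "M^2 * (M - b) \<ge> 1 * (d+1)" using M1 b d0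
      by (intro mult_mono) (auto simp: M_def power_one_right one_le_power)
    moreover have "c * M > 0" using c M1 by simp
    ultimately show ?thesis unfolding f_def by (simp add: power2_eq_square power3_eq_cube algebra_simps)
  qed
  have "\<exists>x\<ge>1. x \<le> M \<and> f x = 0"
    by (rule IVT) (use f1 fM M1 in \<open>auto simp: f_def intro!: continuous_intros\<close>)
  then obtain r where r1: "r \<ge> 1" and fr: "f r = 0" by blast
  have r1': "r > 1" using r1 fr f1 by (cases "r = 1") (auto simp: f_def)
  define p where "p = r - b"
  define q where "q = d / r"
  have rq: "r * q = d" using r1' by (simp add: q_def)
  have cq: "c = q - r * p"
  proof -
    have "r^3 - b*r^2 + c*r - d = 0" using fr by (simp add: f_def)
    hence "c * r = (q - r*p) * r" using rq by (simp add: p_def power2_eq_square power3_eq_cube algebra_simps)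
    thus ?thesis using r1' by simp
  qed
  have fact: "\<And>x. f x = (x - r) * (x^2 + p*x + q)"
    unfolding f_def cq rq[symmetric] p_def by (simp add: power2_eq_square power3_eq_cube algebra_simps)
  have q0: "q > 0" using d0 r1' by (simp add: q_def)
  have q1: "q < 1" using d1 r1' d0 by (simp add: q_def field_simps)
  have Q1: "1 + p + q > 0"
  proof -
    have "f 1 < 0" using f1 by (simp add: f_def)
    hence "(1 - r) * (1 + p + q) < 0" using fact[of 1] by simp
    thus ?thesis using r1' by (simp add: mult_less_0_iff)
  qed
  have neg: "\<And>x. x \<le> 0 \<Longrightarrow> f x < 0"
  proof -
    fix x :: real assume x: "x \<le> 0"
    have "x^3 \<le> 0" using x by (simp add: power3_eq_cube mult_nonneg_nonpos mult_nonpos_nonpos)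
    moreover have "b*x^2 \<ge> 0" using b by simp
    moreover have "c*x \<le> 0" using c x by (simp add: mult_nonneg_nonpos)
    ultimately show "f x < 0" using d0 unfolding f_def by linarith
  qed
  define D where "D = p^2 - 4*q"
  have quad: "\<exists>z1 z2::complex. z1 + z2 = of_real (-p) \<and> z1 * z2 = of_real q \<and> cmod z1 < 1 \<and> cmod z2 < 1"
  proof (cases "D \<ge> 0")
    case True
    define s where "s = sqrt D"
    have s2: "s^2 = D" using True by (simp add: s_def)
    define u where "u = (-p + s)/2"
    define v where "v = (-p - s)/2"
    have uv: "u + v = -p" "u * v = q"
      using s2 by (auto simp: u_def v_def D_def field_simps power2_eq_square)
    have ru: "u^2 + p*u + q = 0" "v^2 + p*v + q = 0"
      using s2 by (auto simp: u_def v_def D_def field_simps power2_eq_square)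
    have u0: "u > 0" using neg[of u] fact[of u] ru by force
    have v0: "v > 0" using neg[of v] fact[of v] ru by force
    have "(1-u)*(1-v) > 0" using Q1 uv by (simp add: algebra_simps)
    hence "u < 1 \<and> v < 1 \<or> u > 1 \<and> v > 1" by (simp add: zero_less_mult_iff)
    moreover have "\<not> (u > 1 \<and> v > 1)"
    proof
      assume "u > 1 \<and> v > 1"
      hence "u * v > 1 * 1" by (intro mult_strict_mono) auto
      thus False using uv q1 by simp
    qed
    ultimately have "u < 1" "v < 1" by auto
    show ?thesis
      by (rule exI[of _ "of_real u"], rule exI[of _ "of_real v"])
        (use uv u0 v0 \<open>u<1\<close> \<open>v<1\<close> in \<open>auto simp flip: of_real_add of_real_mult\<close>)
  next
    case False
    define t where "t = sqrt (-D) / 2"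
    have t2: "t^2 = -D/4" using False by (simp add: t_def power_divide)
    define z where "z = Complex (-p/2) t"
    have "z + cnj z = of_real (-p)" by (simp add: z_def complex_eq_iff)
    moreover have "z * cnj z = of_real q"
      using t2 by (simp add: z_def complex_eq_iff D_def power2_eq_square field_simps)
    moreover have "cmod z < 1"
    proof -
      have "(cmod z)^2 = q" using t2 unfolding cmod_power2 by (simp add: z_def D_def power2_eq_square field_simps)
      hence "(cmod z)^2 < 1^2" using q1 by simp
      thus ?thesis using power2_less_imp_less by fastforce
    qed
    ultimately show ?thesis by (intro exI[of _ z] exI[of _ "cnj z"]) auto
  qed
  then obtain z1 z2 :: complex where zz: "z1 + z2 = of_real (-p)" "z1 * z2 = of_real q"
    "cmod z1 < 1" "cmod z2 < 1" by blast
  have "[:-z1,1:]*[:-z2,1:] = [:z1*z2, -(z1+z2), 1:]" by (simp add: algebra_simps)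
  also have "\<dots> = [:of_real q, of_real p, 1:]" using zz by simp
  finally have e1: "[:-z1,1:]*[:-z2,1:] = [:of_real q, of_real p, 1:]" .
  have e2: "[:of_real q, of_real p, 1:] * [:-of_real r, 1:] =
    [:-of_real d, of_real c, -of_real b, 1::complex:]"
    using rq cq by (simp add: p_def algebra_simps flip: of_real_mult of_real_add of_real_diff)
  show ?thesis
    by (rule exI[of _ z1], rule exI[of _ z2], rule exI[of _ "of_real r"])
      (use e1 e2 zz r1' in auto)
qed
lemma less3: "(i::nat) < 3 \<longleftrightarrow> i = 0 \<or> i = Suc 0 \<or> i = Suc (Suc 0)" by auto
lemma sum3: "(\<Sum>i\<in>{0..<3::nat}. f i) = f 0 + f (Suc 0) + (f (Suc (Suc 0)) :: 'a::comm_monoid_add)"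
  by (simp add: numeral_3_eq_3 add.assoc)
theorem theorem4p2:
  fixes k \<sigma> \<eta> \<beta> :: real
  assumes "k > 0" and "\<sigma> > 0" and "\<eta> > 0" and "0 < \<beta>" and "\<beta> < 1"
  shows "Amat k \<sigma> \<eta> \<beta> = mat_of_rows_list 3
           [[\<sigma>*\<eta>/(1+\<sigma>*\<eta>), \<eta>/(1+\<sigma>*\<eta>), 1/(1+\<sigma>*\<eta>)],
            [k*\<sigma>*\<eta>/(1+\<sigma>*\<eta>), k*\<eta>/(1+\<sigma>*\<eta>) + \<beta>, k/(1+\<sigma>*\<eta>)],
            [k*\<sigma>*\<eta>/(1+\<sigma>*\<eta>), k*\<eta>/(1+\<sigma>*\<eta>) + \<beta>, k/(1+\<sigma>*\<eta>) + 1]]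
       \<and> {z. eigenvalue (map_mat complex_of_real (Amat k \<sigma> \<eta> \<beta>)) z}
           = {z. poly (Ppoly k \<sigma> \<eta> \<beta>) z = 0}
       \<and> (\<exists>z1 z2 z3 :: complex.
            char_poly (map_mat complex_of_real (Amat k \<sigma> \<eta> \<beta>))
              = [:-z1, 1:] * [:-z2, 1:] * [:-z3, 1:]
            \<and> cmod z1 < 1 \<and> cmod z2 < 1 \<and> cmod z3 > 1)"
proof -
  define a where "a = 1 + \<sigma>*\<eta>"
  have a0: "a > 0" unfolding a_def using assms by (smt (verit) mult_pos_pos)
  define L where "L = Lmat k \<sigma> \<eta> \<beta>"
  define Li :: "real mat" where "Li = mat_of_rows_list 3 [[1/a,0,0],[k/a,1,0],[k/a,1,1]]"
  have Lc: "L \<in> carrier_mat 3 3" unfolding L_def Lmat_def mat_of_rows_list_def by (simp add: numeral_3_eq_3)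
  have Lic: "Li \<in> carrier_mat 3 3" unfolding Li_def mat_of_rows_list_def by (simp add: numeral_3_eq_3)
  have LLi: "L * Li = 1\<^sub>m 3"
    unfolding L_def Lmat_def Li_def a_def[symmetric]
    apply (rule eq_matI)
      apply (simp_all add: mat_of_rows_list_def)
    apply (auto simp: less3 scalar_prod_def sum3)
    using a0 by auto
  have "det L = a" unfolding det3[OF Lc]
    by (simp add: L_def Lmat_def mat_of_rows_list_def a_def numeral_3_eq_3 numeral_2_eq_2)
  hence dL: "det L \<noteq> 0" using a0 by simp
  obtain B where mB: "mat_inverse L = Some B"
  proof (cases "mat_inverse L")
    case None
    from mat_inverse(1)[OF Lc None, of "()"] det_non_zero_imp_unit[OF Lc dL, of "()"]
    show ?thesis by simp
  qed
  from mat_inverse(2)[OF Lc mB] have BL: "B * L = 1\<^sub>m 3" and Bc: "B \<in> carrier_mat 3 3" by auto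
  have "B = B * (L * Li)" using Bc by (simp add: LLi)
  also have "\<dots> = (B * L) * Li" using Bc Lc Lic by (simp add: assoc_mult_mat)
  also have "\<dots> = Li" using BL Lic by simp
  finally have BLi: "B = Li" .
  define Ar where "Ar = Amat k \<sigma> \<eta> \<beta>"
  have Aeq': "Ar = mat_of_rows_list 3
           [[\<sigma>*\<eta>/a, \<eta>/a, 1/a],
            [k*\<sigma>*\<eta>/a, k*\<eta>/a + \<beta>, k/a],
            [k*\<sigma>*\<eta>/a, k*\<eta>/a + \<beta>, k/a + 1]]"
    unfolding Ar_def Amat_def L_def[symmetric] mB BLi option.sel Li_def Rmat_def
    apply (rule eq_matI)
      apply (simp_all add: mat_of_rows_list_def)
    apply (auto simp: less3 scalar_prod_def sum3)
    using a0 by (auto simp: less_Suc_eq field_simps)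
  hence Aeq: "Ar = mat_of_rows_list 3
           [[\<sigma>*\<eta>/(1+\<sigma>*\<eta>), \<eta>/(1+\<sigma>*\<eta>), 1/(1+\<sigma>*\<eta>)],
            [k*\<sigma>*\<eta>/(1+\<sigma>*\<eta>), k*\<eta>/(1+\<sigma>*\<eta>) + \<beta>, k/(1+\<sigma>*\<eta>)],
            [k*\<sigma>*\<eta>/(1+\<sigma>*\<eta>), k*\<eta>/(1+\<sigma>*\<eta>) + \<beta>, k/(1+\<sigma>*\<eta>) + 1]]"
    by (simp add: a_def)
  have Arc: "Ar \<in> carrier_mat 3 3" unfolding Aeq mat_of_rows_list_def by (simp add: numeral_3_eq_3)
  have en: "Ar $$ (0,0) = \<sigma>*\<eta>/a" "Ar $$ (0,1) = \<eta>/a" "Ar $$ (0,2) = 1/a"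
    "Ar $$ (1,0) = k*\<sigma>*\<eta>/a" "Ar $$ (1,1) = k*\<eta>/a + \<beta>" "Ar $$ (1,2) = k/a"
    "Ar $$ (2,0) = k*\<sigma>*\<eta>/a" "Ar $$ (2,1) = k*\<eta>/a + \<beta>" "Ar $$ (2,2) = k/a + 1"
    unfolding Aeq' by (simp_all add: mat_of_rows_list_def numeral_3_eq_3 numeral_2_eq_2)
  have dA: "det Ar = Pd k \<sigma> \<eta> \<beta>"
    unfolding det3[OF Arc] en Pd_def a_def[symmetric] using a0
    by (simp add: field_simps)
  have cA: "Ar$$(0,0)*Ar$$(1,1) - Ar$$(0,1)*Ar$$(1,0) + Ar$$(0,0)*Ar$$(2,2) - Ar$$(0,2)*Ar$$(2,0)
     + Ar$$(1,1)*Ar$$(2,2) - Ar$$(1,2)*Ar$$(2,1) = Pc k \<sigma> \<eta> \<beta>"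
    unfolding en Pc_def a_def[symmetric] using a0
    by (simp add: field_simps)
  have bA: "Ar$$(0,0)+Ar$$(1,1)+Ar$$(2,2) = Pb k \<sigma> \<eta> \<beta>"
    unfolding en Pb_def a_def[symmetric] using a0
    by (simp add: field_simps)
  have cpr: "char_poly Ar = [:- Pd k \<sigma> \<eta> \<beta>, Pc k \<sigma> \<eta> \<beta>, - Pb k \<sigma> \<eta> \<beta>, 1:]"
    unfolding cp3[OF Arc] dA cA bA ..
  define Ac where "Ac = map_mat complex_of_real Ar"
  have Acc: "Ac \<in> carrier_mat 3 3" using Arc by (simp add: Ac_def)
  have cpc: "char_poly Ac = Ppoly k \<sigma> \<eta> \<beta>"
    unfolding Ac_def of_real_hom.char_poly_hom[OF Arc] cpr Ppoly_def by simp
  have part2: "{z. eigenvalue Ac z} = {z. poly (Ppoly k \<sigma> \<eta> \<beta>) z = 0}"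
    using eigenvalue_root_char_poly[OF Acc] cpc by auto
  have p1: "Pb k \<sigma> \<eta> \<beta> > 0" unfolding Pb_def a_def[symmetric] using assms a0 by (simp add: add_pos_pos)
  have p2: "Pc k \<sigma> \<eta> \<beta> > 0" unfolding Pc_def a_def[symmetric] using assms a0 by (simp add: add_pos_pos)
  have p3: "Pd k \<sigma> \<eta> \<beta> > 0" unfolding Pd_def a_def[symmetric] using assms a0 by simp
  have p4: "Pd k \<sigma> \<eta> \<beta> < 1"
  proof -
    have x: "\<sigma>*\<eta> > 0" using assms by simp
    have "\<beta>*(\<sigma>*\<eta>) < 1*(\<sigma>*\<eta>)" using assms x by (intro mult_strict_right_mono) auto
    hence "\<beta>*\<sigma>*\<eta> < a" by (simp add: a_def mult.assoc)
    thus ?thesis unfolding Pd_def a_def[symmetric] using a0 by simp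
  qed
  have p5: "1 - Pb k \<sigma> \<eta> \<beta> + Pc k \<sigma> \<eta> \<beta> - Pd k \<sigma> \<eta> \<beta> < 0"
  proof -
    have "1 - Pb k \<sigma> \<eta> \<beta> + Pc k \<sigma> \<eta> \<beta> - Pd k \<sigma> \<eta> \<beta> = - k / a"
      unfolding Pb_def Pc_def Pd_def a_def[symmetric] using a0 by (simp add: field_simps)
    thus ?thesis using a0 assms by simp
  qed
  from roots_loc[OF p1 p2 p3 p4 p5] have part3: "\<exists>z1 z2 z3 :: complex. char_poly Ac
              = [:-z1, 1:] * [:-z2, 1:] * [:-z3, 1:]
            \<and> cmod z1 < 1 \<and> cmod z2 < 1 \<and> cmod z3 > 1"
    unfolding cpc Ppoly_def .
  show ?thesis using Aeq part2 part3 by (simp add: Ar_def Ac_def)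
qed
end
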